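(* Let $f\in\mathrm{LC}$ satisfy (H$_1$), (H$_3$) and (H$_2^*$) there are $\alpha_1>0$ and $K\ge1$ with $\exp\big(\int_s^t\alpha(u)du\big)\le Ke^{-\alpha_1(t-s)}$ for $0\le s\le t$. Then for every $\tau\in\mathbb R$ the solutions of $\dot x=f(t,x)$ are uniformly ultimately bounded on $[\tau,\infty)$.
   Context: $\mathrm{LC}$: Borel measurable $f:\mathbb R\times\mathbb R^N\to\mathbb R^N$ such that for every compact $K$ there are $m^K,l^K\in L^1_{loc}$ with $|f(t,x)|\le m^K(t)$ and $|f(t,x)-f(t,y)|\le l^K(t)|x-y|$ for $x,y\in K$, a.e. $t$. (H$_1$): there exist $\alpha,\beta\in L^1_{loc}$ with $\beta\ge0$ such that $2\langle f(t,x),x\rangle\le\alpha(t)|x|^2+\beta(t)$ for a.e. $(t,x)\in\mathbb R^{1+N}$. (H$_3$): $\sup_{t\in\mathbb R}\int_{-r}^r\beta(s+t)ds<\infty$ for every $r>0$. Under (H$_1$) solutions of $\dot x=f(t,x)$, $x(r)=x_0$ exist on $[r,\infty)$; $S_f(t,r)x_0$ denotes their value at $t\ge r$. The solutions are uniformly ultimately bounded on $[\tau,\infty)$ if there is $c(\tau)>0$ such that for every $d>0$ there is $T(\tau,d)>0$ with $|S_f(t+r,r)x_0|\le c(\tau)$ whenever $r\ge\tau$, $t\ge T(\tau,d)$, $|x_0|\le d$. *)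

theory Defs
  imports "HOL-Analysis.Analysis"
begin

definition L1_loc :: "(real \<Rightarrow> real) \<Rightarrow> bool" where
  "L1_loc m \<longleftrightarrow> (\<forall>a b. m absolutely_integrable_on {a..b})"

definition LC :: "(real \<Rightarrow> 'a::euclidean_space \<Rightarrow> 'a) \<Rightarrow> bool" where
  "LC f \<longleftrightarrow>
     (\<lambda>p. f (fst p) (snd p)) \<in> borel_measurable borel \<and>
     (\<forall>K. compact K \<longrightarrow>
        (\<exists>m l. L1_loc m \<and> L1_loc l \<and>
           (AE t in lborel. \<forall>x\<in>K. \<forall>y\<in>K.
               norm (f t x) \<le> m t \<and> norm (f t x - f t y) \<le> l t * norm (x - y))))"

definition H1 :: "(real \<Rightarrow> 'a::euclidean_space \<Rightarrow> 'a) \<Rightarrow> (real \<Rightarrow> real) \<Rightarrow> (real \<Rightarrow> real) \<Rightarrow> bool" where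
  "H1 f \<alpha> \<beta> \<longleftrightarrow> L1_loc \<alpha> \<and> L1_loc \<beta> \<and> (\<forall>t. \<beta> t \<ge> 0) \<and>
     (AE p in (lborel :: (real \<times> 'a) measure).
        2 * (f (fst p) (snd p) \<bullet> snd p) \<le> \<alpha> (fst p) * (norm (snd p))\<^sup>2 + \<beta> (fst p))"

definition H3 :: "(real \<Rightarrow> real) \<Rightarrow> bool" where
  "H3 \<beta> \<longleftrightarrow> (\<forall>r>0. bdd_above (range (\<lambda>t. integral {-r..r} (\<lambda>s. \<beta> (s + t)))))"

definition H2star :: "(real \<Rightarrow> real) \<Rightarrow> bool" where
  "H2star \<alpha> \<longleftrightarrow> (\<exists>\<alpha>1>0. \<exists>K\<ge>1. \<forall>s t. 0 \<le> s \<and> s \<le> t \<longrightarrow>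
       exp (integral {s..t} \<alpha>) \<le> K * exp (- \<alpha>1 * (t - s)))"

definition is_solution :: "(real \<Rightarrow> 'a::euclidean_space \<Rightarrow> 'a) \<Rightarrow> real \<Rightarrow> 'a \<Rightarrow> (real \<Rightarrow> 'a) \<Rightarrow> bool" where
  "is_solution f r x0 x \<longleftrightarrow> x r = x0 \<and> continuous_on {r..} x \<and>
     (\<forall>t\<ge>r. (\<lambda>s. f s (x s)) absolutely_integrable_on {r..t} \<and>
             ((\<lambda>s. f s (x s)) has_integral (x t - x0)) {r..t})"

text \<open>Uniform ultimate boundedness on [tau, infinity) (for all solutions; under LC they are unique).\<close>
definition uub :: "(real \<Rightarrow> 'a::euclidean_space \<Rightarrow> 'a) \<Rightarrow> real \<Rightarrow> bool" where
  "uub f \<tau> \<longleftrightarrow> (\<exists>c>0. \<forall>d>0. \<exists>T>0. \<forall>r x0 x t.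
      r \<ge> \<tau> \<longrightarrow> t \<ge> T \<longrightarrow> norm x0 \<le> d \<longrightarrow> is_solution f r x0 x \<longrightarrow> norm (x (t + r)) \<le> c)"

end

theory Submission
  imports Defs
begin


lemma tele_zero:
  fixes \<Phi> M :: "real \<Rightarrow> real"
  assumes ab: "a \<le> b"
  and H: "\<And>\<epsilon>. \<epsilon> > 0 \<Longrightarrow> \<exists>\<delta>>0. \<forall>p q. a \<le> p \<longrightarrow> p \<le> q \<longrightarrow> q \<le> b \<longrightarrow> q - p < \<delta> \<longrightarrow>
              \<bar>\<Phi> q - \<Phi> p\<bar> \<le> \<epsilon> * (M q - M p)"
  shows "\<Phi> b = \<Phi> a"
proof -
  have main: "\<bar>\<Phi> b - \<Phi> a\<bar> \<le> \<epsilon> * (M b - M a)" if ep0: "\<epsilon> > 0" for \<epsilon>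
  proof -
    obtain \<delta> where \<delta>: "\<delta>>0" and Hd: "\<forall>p q. a \<le> p \<longrightarrow> p \<le> q \<longrightarrow> q \<le> b \<longrightarrow> q - p < \<delta> \<longrightarrow>
              \<bar>\<Phi> q - \<Phi> p\<bar> \<le> \<epsilon> * (M q - M p)" using H[OF ep0] by blast
    obtain n::nat where n: "(b-a)/\<delta> < n" using reals_Archimedean2 by blast
    have "(b-a)/\<delta> \<ge> 0" using ab \<delta> by simp
    then have npos: "n > 0" using n by (cases n) auto
    define x where "x i = a + real i * (b-a)/n" for i::nat
    have x0: "x 0 = a" and xn: "x n = b" using npos by (auto simp: x_def)
    have dl: "(b-a)/n < \<delta>" using n npos \<delta> by (simp add: field_simps)
    have step: "\<bar>\<Phi> (x (Suc i)) - \<Phi> (x i)\<bar> \<le> \<epsilon> * (M (x (Suc i)) - M (x i))" if "i < n" for i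
    proof -
      have d: "x (Suc i) - x i = (b-a)/n" by (simp add: x_def add_divide_distrib[symmetric] algebra_simps)
      have "x i \<ge> a" using ab by (simp add: x_def)
      moreover have "x (Suc i) \<le> b"
      proof -
        have "real (Suc i) * (b-a)/n \<le> real n * (b-a)/n"
          using that ab by (intro divide_right_mono mult_right_mono) auto
        then show ?thesis using npos by (simp add: x_def)
      qed
      moreover have "x i \<le> x (Suc i)" proof - have "(b-a)/n \<ge> 0" using ab by simp then show ?thesis using d by linarith qed
      ultimately show ?thesis using Hd d dl by auto
    qed
    have "\<Phi> b - \<Phi> a = (\<Sum>i<n. \<Phi> (x (Suc i)) - \<Phi> (x i))"
      using sum_lessThan_telescope[of "\<lambda>i. \<Phi> (x i)" n] by (simp add: x0 xn)
    then have "\<bar>\<Phi> b - \<Phi> a\<bar> \<le> (\<Sum>i<n. \<bar>\<Phi> (x (Suc i)) - \<Phi> (x i)\<bar>)"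
      by (simp add: sum_abs)
    also have "\<dots> \<le> (\<Sum>i<n. \<epsilon> * (M (x (Suc i)) - M (x i)))"
      by (intro sum_mono step) auto
    also have "\<dots> = \<epsilon> * (M b - M a)"
      using sum_lessThan_telescope[of "\<lambda>i. M (x i)" n] by (simp add: sum_distrib_left[symmetric] x0 xn)
    finally show ?thesis .
  qed
  show ?thesis
  proof (rule ccontr)
    assume ne: "\<Phi> b \<noteq> \<Phi> a"
    show False
    proof (cases "M b - M a \<le> 0")
      case True
      then show False using main[of 1] ne by simp
    next
      case False
      define \<epsilon> where "\<epsilon> = \<bar>\<Phi> b - \<Phi> a\<bar> / (2 * (M b - M a))"
      have ep: "\<epsilon> > 0" using False ne by (simp add: \<epsilon>_def)
      have "\<epsilon> * (M b - M a) = \<bar>\<Phi> b - \<Phi> a\<bar> / 2" using False unfolding \<epsilon>_def by (simp add: field_simps)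
      then show False using main[OF ep] ne by simp
    qed
  qed
qed



lemma bilinear_inner': "bilinear (\<lambda>x y::'a::real_inner. x \<bullet> y)"
  by (auto simp: bilinear_def linear_iff inner_add_left inner_add_right)

lemma abs_int_inner_cont:
  fixes v g :: "real \<Rightarrow> 'a::euclidean_space"
  assumes "continuous_on {a..b} v" "g absolutely_integrable_on {a..b}"
  shows "(\<lambda>t. v t \<bullet> g t) absolutely_integrable_on {a..b}"
    and "(\<lambda>t. g t \<bullet> v t) absolutely_integrable_on {a..b}"
proof -
  have m: "v \<in> borel_measurable (lebesgue_on {a..b})"
    using assms(1) by (intro continuous_imp_measurable_on_sets_lebesgue) auto
  have bd: "bounded (v ` {a..b})"
    using assms(1) by (intro compact_imp_bounded compact_continuous_image) auto
  show 1: "(\<lambda>t. v t \<bullet> g t) absolutely_integrable_on {a..b}"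
    by (rule absolutely_integrable_bounded_measurable_product[OF bilinear_inner' m _ bd assms(2)]) auto
  show "(\<lambda>t. g t \<bullet> v t) absolutely_integrable_on {a..b}"
    using 1 by (simp add: inner_commute)
qed

lemma repr_continuous:
  fixes u u' :: "real \<Rightarrow> 'a::euclidean_space"
  assumes "u' integrable_on {a..b}" "\<And>t. t \<in> {a..b} \<Longrightarrow> u t = u a + integral {a..t} u'"
  shows "continuous_on {a..b} u"
proof -
  have "continuous_on {a..b} (\<lambda>t. u a + integral {a..t} u')"
    by (intro continuous_intros indefinite_integral_continuous_1 assms)
  then show ?thesis using continuous_on_cong assms(2) by (metis (no_types, lifting))
qed

lemma repr_diff:
  fixes u u' :: "real \<Rightarrow> 'a::euclidean_space"
  assumes "u' integrable_on {a..b}" "\<And>t. t \<in> {a..b} \<Longrightarrow> u t = u a + integral {a..t} u'"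
    and "a \<le> p" "p \<le> q" "q \<le> b"
  shows "u q - u p = integral {p..q} u'"
proof -
  have "u' integrable_on {a..q}" using integrable_on_subinterval[OF assms(1)] assms by auto
  then have "integral {a..p} u' + integral {p..q} u' = integral {a..q} u'"
    using assms by (intro Henstock_Kurzweil_Integration.integral_combine) auto
  then show ?thesis using assms(2)[of p] assms(2)[of q] assms(3-5) by (auto simp: algebra_simps)
qed

lemma ind_diff:
  fixes k :: "real \<Rightarrow> 'a::euclidean_space"
  assumes "k integrable_on {a..b}" "a \<le> p" "p \<le> q" "q \<le> b"
  shows "integral {a..q} k - integral {a..p} k = integral {p..q} k"
proof -
  have "k integrable_on {a..q}" using integrable_on_subinterval[OF assms(1)] assms by auto
  then have "integral {a..p} k + integral {p..q} k = integral {a..q} k"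
    using assms by (intro Henstock_Kurzweil_Integration.integral_combine) auto
  then show ?thesis by (simp add: algebra_simps)
qed

lemma product_rule:
  fixes u v u' v' :: "real \<Rightarrow> 'a::euclidean_space"
  assumes ab: "a \<le> b"
   and iu: "u' absolutely_integrable_on {a..b}" and iv: "v' absolutely_integrable_on {a..b}"
   and eu: "\<And>t. t \<in> {a..b} \<Longrightarrow> u t = u a + integral {a..t} u'"
   and ev: "\<And>t. t \<in> {a..b} \<Longrightarrow> v t = v a + integral {a..t} v'"
  shows "(\<lambda>t. u' t \<bullet> v t + u t \<bullet> v' t) absolutely_integrable_on {a..b}"
    and "u b \<bullet> v b - u a \<bullet> v a = integral {a..b} (\<lambda>t. u' t \<bullet> v t + u t \<bullet> v' t)"
proof -
  have iu1: "u' integrable_on {a..b}" and iu2: "(\<lambda>t. norm (u' t)) integrable_on {a..b}"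
    using iu absolutely_integrable_on_def by auto
  have iv1: "v' integrable_on {a..b}" and iv2: "(\<lambda>t. norm (v' t)) integrable_on {a..b}"
    using iv absolutely_integrable_on_def by auto
  have cu: "continuous_on {a..b} u" by (rule repr_continuous[OF iu1 eu])
  have cv: "continuous_on {a..b} v" by (rule repr_continuous[OF iv1 ev])
  have k1: "(\<lambda>t. u' t \<bullet> v t) absolutely_integrable_on {a..b}" by (rule abs_int_inner_cont(2)[OF cv iu])
  have k2: "(\<lambda>t. u t \<bullet> v' t) absolutely_integrable_on {a..b}" by (rule abs_int_inner_cont(1)[OF cu iv])
  show kabs: "(\<lambda>t. u' t \<bullet> v t + u t \<bullet> v' t) absolutely_integrable_on {a..b}"
    using k1 k2 by (rule set_integral_add(1))
  define k where "k = (\<lambda>t. u' t \<bullet> v t + u t \<bullet> v' t)"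
  define m where "m = (\<lambda>t. norm (u' t) + norm (v' t))"
  have ik: "k integrable_on {a..b}" using kabs absolutely_integrable_on_def k_def by auto
  have ik1: "(\<lambda>t. u' t \<bullet> v t) integrable_on {a..b}" using k1 absolutely_integrable_on_def by auto
  have ik2: "(\<lambda>t. u t \<bullet> v' t) integrable_on {a..b}" using k2 absolutely_integrable_on_def by auto
  have im: "m integrable_on {a..b}" unfolding m_def using iu2 iv2 by (rule integrable_add)
  define \<Phi> where "\<Phi> t = u t \<bullet> v t - integral {a..t} k" for t
  define M where "M t = integral {a..t} m" for t
  have "\<Phi> b = \<Phi> a"
  proof (rule tele_zero[OF ab])
    fix \<epsilon> :: real assume ep: "\<epsilon> > 0"
    have ucu: "uniformly_continuous_on {a..b} u" by (rule compact_uniformly_continuous[OF cu]) auto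
    have ucv: "uniformly_continuous_on {a..b} v" by (rule compact_uniformly_continuous[OF cv]) auto
    obtain d1 where d1: "d1 > 0" "\<forall>x\<in>{a..b}. \<forall>x'\<in>{a..b}. dist x' x < d1 \<longrightarrow> dist (u x') (u x) < \<epsilon>/2"
      using ucu ep unfolding uniformly_continuous_on_def by (meson half_gt_zero)
    obtain d2 where d2: "d2 > 0" "\<forall>x\<in>{a..b}. \<forall>x'\<in>{a..b}. dist x' x < d2 \<longrightarrow> dist (v x') (v x) < \<epsilon>/2"
      using ucv ep unfolding uniformly_continuous_on_def by (meson half_gt_zero)
    show "\<exists>\<delta>>0. \<forall>p q. a \<le> p \<longrightarrow> p \<le> q \<longrightarrow> q \<le> b \<longrightarrow> q - p < \<delta> \<longrightarrow>
              \<bar>\<Phi> q - \<Phi> p\<bar> \<le> \<epsilon> * (M q - M p)"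
    proof (intro exI[of _ "min d1 d2"] conjI allI impI)
      show "min d1 d2 > 0" using d1 d2 by simp
      fix p q assume pq: "a \<le> p" "p \<le> q" "q \<le> b" "q - p < min d1 d2"
      have sub: "{p..q} \<subseteq> {a..b}" using pq by auto
      have close_u: "norm (u p - u w) \<le> \<epsilon>/2" if "w \<in> {p..q}" for w
      proof -
        have "dist (u p) (u w) < \<epsilon>/2" using d1(2) that pq sub by (auto simp: dist_real_def)
        then show ?thesis by (simp add: dist_norm)
      qed
      have close_v: "norm (v p - v w) \<le> \<epsilon>/2" if "w \<in> {p..q}" for w
      proof -
        have "dist (v p) (v w) < \<epsilon>/2" using d2(2) that pq sub by (auto simp: dist_real_def)
        then show ?thesis by (simp add: dist_norm)
      qed
      have close_uq: "norm (u q - u p) \<le> \<epsilon>/2" using close_u[of q] pq by (simp add: norm_minus_commute)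
      define U where "U = integral {p..q} u'"
      define V where "V = integral {p..q} v'"
      have Ueq: "u q - u p = U" unfolding U_def using repr_diff[OF iu1 eu pq(1-3)] .
      have Veq: "v q - v p = V" unfolding V_def using repr_diff[OF iv1 ev pq(1-3)] .
      have iu1': "u' integrable_on {p..q}" using integrable_on_subinterval[OF iu1 sub] .
      have iv1': "v' integrable_on {p..q}" using integrable_on_subinterval[OF iv1 sub] .
      have iu2': "(\<lambda>t. norm (u' t)) integrable_on {p..q}" using integrable_on_subinterval[OF iu2 sub] .
      have iv2': "(\<lambda>t. norm (v' t)) integrable_on {p..q}" using integrable_on_subinterval[OF iv2 sub] .
      have ik1': "(\<lambda>t. u' t \<bullet> v t) integrable_on {p..q}" using integrable_on_subinterval[OF ik1 sub] .
      have ik2': "(\<lambda>t. u t \<bullet> v' t) integrable_on {p..q}" using integrable_on_subinterval[OF ik2 sub] .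
      have c1: "(\<lambda>t. u' t \<bullet> v p) integrable_on {p..q}"
        using iu1' by (intro integrable_component)
      have c2: "(\<lambda>t. u p \<bullet> v' t) integrable_on {p..q}"
        using iv1' integrable_component[OF iv1', of "u p"] by (simp add: inner_commute)
      have Uv: "U \<bullet> v p = integral {p..q} (\<lambda>t. u' t \<bullet> v p)"
        unfolding U_def using integral_component_eq[OF iu1'] by simp
      have uV: "u p \<bullet> V = integral {p..q} (\<lambda>t. u p \<bullet> v' t)"
        unfolding V_def using integral_component_eq[OF iv1', of "u p"] by (simp add: inner_commute)
      have kk: "integral {p..q} k = integral {p..q} (\<lambda>t. u' t \<bullet> v t) + integral {p..q} (\<lambda>t. u t \<bullet> v' t)"
        unfolding k_def by (rule integral_add[OF ik1' ik2'])
      have "\<Phi> q - \<Phi> p = (u q \<bullet> v q - u p \<bullet> v p) - integral {p..q} k"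
        unfolding \<Phi>_def using ind_diff[OF ik pq(1-3)] by simp
      also have "u q \<bullet> v q - u p \<bullet> v p = U \<bullet> v p + u p \<bullet> V + U \<bullet> V"
      proof -
        have "u q = u p + U" "v q = v p + V" using Ueq Veq by (simp_all add: algebra_simps)
        then show ?thesis by (simp add: inner_add_left inner_add_right)
      qed
      finally have eq: "\<Phi> q - \<Phi> p = integral {p..q} (\<lambda>t. u' t \<bullet> (v p - v t))
          + integral {p..q} (\<lambda>t. (u p - u t) \<bullet> v' t) + U \<bullet> V"
        using Uv uV kk integral_diff[OF c1 ik1'] integral_diff[OF c2 ik2']
        by (simp add: inner_diff_left inner_diff_right algebra_simps)
      have b1: "norm (integral {p..q} (\<lambda>t. u' t \<bullet> (v p - v t))) \<le> integral {p..q} (\<lambda>t. \<epsilon>/2 * norm (u' t))"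
      proof (rule integral_norm_bound_integral)
        show "(\<lambda>t. u' t \<bullet> (v p - v t)) integrable_on {p..q}"
          using integrable_diff[OF c1 ik1'] by (simp add: inner_diff_right)
        show "(\<lambda>t. \<epsilon>/2 * norm (u' t)) integrable_on {p..q}" using iu2' ep by simp
        fix t assume t: "t \<in> {p..q}"
        have "norm (u' t \<bullet> (v p - v t)) \<le> norm (u' t) * norm (v p - v t)"
          by (simp add: Cauchy_Schwarz_ineq2)
        also have "\<dots> \<le> norm (u' t) * (\<epsilon>/2)" using close_v[OF t] by (intro mult_left_mono) auto
        finally show "norm (u' t \<bullet> (v p - v t)) \<le> \<epsilon>/2 * norm (u' t)" by (simp add: mult.commute)
      qed
      have b2: "norm (integral {p..q} (\<lambda>t. (u p - u t) \<bullet> v' t)) \<le> integral {p..q} (\<lambda>t. \<epsilon>/2 * norm (v' t))"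
      proof (rule integral_norm_bound_integral)
        show "(\<lambda>t. (u p - u t) \<bullet> v' t) integrable_on {p..q}"
          using integrable_diff[OF c2 ik2'] by (simp add: inner_diff_left)
        show "(\<lambda>t. \<epsilon>/2 * norm (v' t)) integrable_on {p..q}" using iv2' ep by simp
        fix t assume t: "t \<in> {p..q}"
        have "norm ((u p - u t) \<bullet> v' t) \<le> norm (u p - u t) * norm (v' t)"
          by (simp add: Cauchy_Schwarz_ineq2)
        also have "\<dots> \<le> (\<epsilon>/2) * norm (v' t)" using close_u[OF t] by (intro mult_right_mono) auto
        finally show "norm ((u p - u t) \<bullet> v' t) \<le> \<epsilon>/2 * norm (v' t)" .
      qed
      have b3: "norm (U \<bullet> V) \<le> \<epsilon>/2 * integral {p..q} (\<lambda>t. norm (v' t))"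
      proof -
        have nV: "norm V \<le> integral {p..q} (\<lambda>t. norm (v' t))"
          unfolding V_def by (rule integral_norm_bound_integral[OF iv1' iv2']) auto
        have "norm (U \<bullet> V) \<le> norm U * norm V" by (simp add: Cauchy_Schwarz_ineq2)
        also have "\<dots> \<le> (\<epsilon>/2) * integral {p..q} (\<lambda>t. norm (v' t))"
          using close_uq Ueq nV ep by (intro mult_mono) auto
        finally show ?thesis .
      qed
      have i1: "integral {p..q} (\<lambda>t. \<epsilon>/2 * norm (u' t)) = \<epsilon>/2 * integral {p..q} (\<lambda>t. norm (u' t))"
        by simp
      have i2: "integral {p..q} (\<lambda>t. \<epsilon>/2 * norm (v' t)) = \<epsilon>/2 * integral {p..q} (\<lambda>t. norm (v' t))"
        by simp
      have nn1: "integral {p..q} (\<lambda>t. norm (u' t)) \<ge> 0" by (rule integral_nonneg[OF iu2']) auto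
      have nn2: "integral {p..q} (\<lambda>t. norm (v' t)) \<ge> 0" by (rule integral_nonneg[OF iv2']) auto
      have Mq: "M q - M p = integral {p..q} (\<lambda>t. norm (u' t)) + integral {p..q} (\<lambda>t. norm (v' t))"
        unfolding M_def using ind_diff[OF im pq(1-3)] integral_add[OF iu2' iv2'] by (simp add: m_def)
      have "\<bar>\<Phi> q - \<Phi> p\<bar> \<le> norm (integral {p..q} (\<lambda>t. u' t \<bullet> (v p - v t)))
          + norm (integral {p..q} (\<lambda>t. (u p - u t) \<bullet> v' t)) + norm (U \<bullet> V)"
        unfolding eq real_norm_def by linarith
      also have "\<dots> \<le> \<epsilon>/2 * integral {p..q} (\<lambda>t. norm (u' t)) + \<epsilon> * integral {p..q} (\<lambda>t. norm (v' t))"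
        using b1 b2 b3 i1 i2 by linarith
      also have "\<dots> \<le> \<epsilon> * (M q - M p)"
        unfolding Mq using nn1 ep by (simp add: algebra_simps)
      finally show "\<bar>\<Phi> q - \<Phi> p\<bar> \<le> \<epsilon> * (M q - M p)" .
    qed
  qed
  then show "u b \<bullet> v b - u a \<bullet> v a = integral {a..b} (\<lambda>t. u' t \<bullet> v t + u t \<bullet> v' t)"
    unfolding \<Phi>_def k_def by simp
qed



lemma exp_quad:
  fixes z :: real
  assumes "\<bar>z\<bar> \<le> 1"
  shows "\<bar>exp z - 1 - z\<bar> \<le> z\<^sup>2"
proof -
  have lo: "exp z - 1 - z \<ge> 0" using exp_ge_add_one_self[of z] by linarith
  have up: "exp z \<le> 1 + z + z\<^sup>2"
  proof (cases "z \<ge> 0")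
    case True then show ?thesis using exp_bound[of z] assms by simp
  next
    case False
    define x where "x = -z"
    have x: "0 < x" "x \<le> 1" using False assms by (auto simp: x_def)
    have e1: "exp x \<ge> 1 + x" using exp_ge_add_one_self[of x] by simp
    have "(1 + x) * (1 - x + x\<^sup>2) = 1 + x^3" by (simp add: algebra_simps power2_eq_square power3_eq_cube)
    then have "(1 + x) * (1 - x + x\<^sup>2) \<ge> 1" using x by simp
    moreover have pos: "1 - x + x\<^sup>2 > 0" using x by (simp add: power2_eq_square) (smt (verit) mult_pos_pos)
    ultimately have "exp x * (1 - x + x\<^sup>2) \<ge> 1" using e1
      by (smt (verit) mult_right_mono)
    then have "1 / exp x \<le> 1 - x + x\<^sup>2" by (simp add: field_simps)
    then show ?thesis by (simp add: x_def exp_minus field_simps)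
  qed
  show ?thesis using lo up by simp
qed

lemma exp_chain:
  fixes \<alpha> :: "real \<Rightarrow> real"
  assumes ab: "a \<le> b" and ia: "\<alpha> absolutely_integrable_on {a..b}"
  shows "(\<lambda>t. - \<alpha> t * exp (- integral {a..t} \<alpha>)) absolutely_integrable_on {a..b}"
   and "exp (- integral {a..b} \<alpha>) - exp (- integral {a..a} \<alpha>) =
          integral {a..b} (\<lambda>t. - \<alpha> t * exp (- integral {a..t} \<alpha>))"
proof -
  define A where "A t = integral {a..t} \<alpha>" for t
  define E where "E t = exp (- A t)" for t
  have i1: "\<alpha> integrable_on {a..b}" and i2: "(\<lambda>t. norm (\<alpha> t)) integrable_on {a..b}"
    using ia unfolding absolutely_integrable_on_def by blast+
  have cA: "continuous_on {a..b} A" unfolding A_def by (rule indefinite_integral_continuous_1[OF i1])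
  have cE: "continuous_on {a..b} E" unfolding E_def by (intro continuous_intros cA)
  have ina: "(\<lambda>t. - \<alpha> t) absolutely_integrable_on {a..b}"
    using i1 i2 by (simp add: absolutely_integrable_on_def integrable_neg)
  have kabs: "(\<lambda>t. - \<alpha> t * E t) absolutely_integrable_on {a..b}"
    using abs_int_inner_cont(2)[OF cE ina] by simp
  then show "(\<lambda>t. - \<alpha> t * exp (- integral {a..t} \<alpha>)) absolutely_integrable_on {a..b}"
    by (simp add: E_def A_def)
  define k where "k = (\<lambda>t. - \<alpha> t * E t)"
  have ik: "k integrable_on {a..b}" using kabs unfolding absolutely_integrable_on_def k_def by blast
  have iaE: "(\<lambda>t. \<alpha> t * E t) integrable_on {a..b}" using integrable_neg[OF ik] by (simp add: k_def)
  define \<Phi> where "\<Phi> t = E t - integral {a..t} k" for t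
  define M where "M t = integral {a..t} (\<lambda>t. norm (\<alpha> t))" for t
  obtain C where C: "C > 0" "\<And>t. t \<in> {a..b} \<Longrightarrow> norm (E t) \<le> C"
  proof -
    have "bounded (E ` {a..b})" using cE by (intro compact_imp_bounded compact_continuous_image) auto
    then show ?thesis using that bounded_pos by (metis imageI)
  qed
  have "\<Phi> b = \<Phi> a"
  proof (rule tele_zero[OF ab])
    fix \<epsilon> :: real assume ep: "\<epsilon> > 0"
    have ucA: "uniformly_continuous_on {a..b} A" by (rule compact_uniformly_continuous[OF cA]) auto
    have ucE: "uniformly_continuous_on {a..b} E" by (rule compact_uniformly_continuous[OF cE]) auto
    define \<eta> where "\<eta> = min 1 (\<epsilon> / (2*C))"
    have eta1: "\<eta> > 0" "\<eta> \<le> 1" using ep C by (auto simp: \<eta>_def)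
    have "\<eta> \<le> \<epsilon> / (2*C)" by (simp add: \<eta>_def)
    then have "C * \<eta> \<le> C * (\<epsilon> / (2*C))" using C by (intro mult_left_mono) auto
    then have "C * \<eta> \<le> \<epsilon>/2" using C by simp
    note eta = eta1 this
    obtain d1 where d1: "d1 > 0" "\<forall>x\<in>{a..b}. \<forall>x'\<in>{a..b}. dist x' x < d1 \<longrightarrow> dist (A x') (A x) < \<eta>"
      using ucA eta unfolding uniformly_continuous_on_def by meson
    obtain d2 where d2: "d2 > 0" "\<forall>x\<in>{a..b}. \<forall>x'\<in>{a..b}. dist x' x < d2 \<longrightarrow> dist (E x') (E x) < \<epsilon>/2"
      using ucE ep unfolding uniformly_continuous_on_def by (meson half_gt_zero)
    show "\<exists>\<delta>>0. \<forall>p q. a \<le> p \<longrightarrow> p \<le> q \<longrightarrow> q \<le> b \<longrightarrow> q - p < \<delta> \<longrightarrow>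
              \<bar>\<Phi> q - \<Phi> p\<bar> \<le> \<epsilon> * (M q - M p)"
    proof (intro exI[of _ "min d1 d2"] conjI allI impI)
      show "min d1 d2 > 0" using d1 d2 by simp
      fix p q assume pq: "a \<le> p" "p \<le> q" "q \<le> b" "q - p < min d1 d2"
      have sub: "{p..q} \<subseteq> {a..b}" using pq by auto
      have closeE: "\<bar>E w - E p\<bar> \<le> \<epsilon>/2" if "w \<in> {p..q}" for w
      proof -
        have "dist (E w) (E p) < \<epsilon>/2" using d2(2) that pq sub by (auto simp: dist_real_def)
        then show ?thesis by (simp add: dist_real_def)
      qed
      define D where "D = A q - A p"
      have Dsmall: "\<bar>D\<bar> \<le> \<eta>"
      proof -
        have "dist (A q) (A p) < \<eta>" using d1(2) pq sub by (auto simp: dist_real_def)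
        then show ?thesis by (simp add: dist_real_def D_def)
      qed
      have i1': "\<alpha> integrable_on {p..q}" using integrable_on_subinterval[OF i1 sub] .
      have i2': "(\<lambda>t. norm (\<alpha> t)) integrable_on {p..q}" using integrable_on_subinterval[OF i2 sub] .
      have iaE': "(\<lambda>t. \<alpha> t * E t) integrable_on {p..q}" using integrable_on_subinterval[OF iaE sub] .
      have Deq: "D = integral {p..q} \<alpha>" unfolding D_def A_def using ind_diff[OF i1 pq(1-3)] .
      have Dle: "\<bar>D\<bar> \<le> integral {p..q} (\<lambda>t. norm (\<alpha> t))"
        unfolding Deq using integral_norm_bound_integral[OF i1' i2'] by auto
      have Mq: "M q - M p = integral {p..q} (\<lambda>t. norm (\<alpha> t))"
        unfolding M_def using ind_diff[OF i2 pq(1-3)] .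
      have Eq: "E q = E p * exp (- D)" unfolding E_def D_def by (simp add: exp_add[symmetric])
      have c1: "(\<lambda>t. \<alpha> t * E p) integrable_on {p..q}" using i1' by (rule integrable_on_mult_left)
      have iaE2: "integral {p..q} (\<lambda>t. \<alpha> t * E t) =
          integral {p..q} (\<lambda>t. \<alpha> t * (E t - E p)) + E p * D"
      proof -
        have "integral {p..q} (\<lambda>t. \<alpha> t * (E t - E p)) =
            integral {p..q} (\<lambda>t. \<alpha> t * E t) - integral {p..q} (\<lambda>t. \<alpha> t * E p)"
          using integral_diff[OF iaE' c1] by (simp add: algebra_simps)
        moreover have "integral {p..q} (\<lambda>t. \<alpha> t * E p) = E p * D" using Deq by simp
        ultimately show ?thesis by (simp add: Deq)
      qed
      have kint: "integral {p..q} k = - integral {p..q} (\<lambda>t. \<alpha> t * E t)"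
        unfolding k_def using integral_neg[of "{p..q}" "\<lambda>t. \<alpha> t * E t"] by simp
      have eq: "\<Phi> q - \<Phi> p = E p * (exp (- D) - 1 - (- D)) + integral {p..q} (\<lambda>t. \<alpha> t * (E t - E p))"
        unfolding \<Phi>_def using ind_diff[OF ik pq(1-3)] kint iaE2 Eq by (simp add: algebra_simps)
      have b1: "\<bar>E p * (exp (- D) - 1 - (- D))\<bar> \<le> \<epsilon>/2 * integral {p..q} (\<lambda>t. norm (\<alpha> t))"
      proof -
        have "\<bar>exp (- D) - 1 - (- D)\<bar> \<le> (-D)\<^sup>2" using exp_quad[of "-D"] Dsmall eta by simp
        also have "\<dots> = \<bar>D\<bar> * \<bar>D\<bar>" by (simp add: power2_eq_square)
        also have "\<dots> \<le> \<eta> * integral {p..q} (\<lambda>t. norm (\<alpha> t))"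
          using Dsmall Dle by (intro mult_mono) auto
        finally have x: "\<bar>exp (- D) - 1 - (- D)\<bar> \<le> \<eta> * integral {p..q} (\<lambda>t. norm (\<alpha> t))" .
        have "\<bar>E p * (exp (- D) - 1 - (- D))\<bar> = \<bar>E p\<bar> * \<bar>exp (- D) - 1 - (- D)\<bar>" by (simp add: abs_mult)
        also have "\<dots> \<le> C * (\<eta> * integral {p..q} (\<lambda>t. norm (\<alpha> t)))"
          using C(2)[of p] pq x by (intro mult_mono) auto
        also have "\<dots> \<le> \<epsilon>/2 * integral {p..q} (\<lambda>t. norm (\<alpha> t))"
          using mult_right_mono[OF eta(3) integral_nonneg[OF i2']] by (simp add: mult.assoc)
        finally show ?thesis .
      qed
      have b2: "\<bar>integral {p..q} (\<lambda>t. \<alpha> t * (E t - E p))\<bar> \<le> integral {p..q} (\<lambda>t. \<epsilon>/2 * norm (\<alpha> t))"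
      proof -
        have "norm (integral {p..q} (\<lambda>t. \<alpha> t * (E t - E p))) \<le> integral {p..q} (\<lambda>t. \<epsilon>/2 * norm (\<alpha> t))"
        proof (rule integral_norm_bound_integral)
          show "(\<lambda>t. \<alpha> t * (E t - E p)) integrable_on {p..q}"
            using integrable_diff[OF iaE' c1] by (simp add: algebra_simps)
          show "(\<lambda>t. \<epsilon>/2 * norm (\<alpha> t)) integrable_on {p..q}" using i2' ep by simp
          fix t assume t: "t \<in> {p..q}"
          have "norm (\<alpha> t * (E t - E p)) = norm (\<alpha> t) * \<bar>E t - E p\<bar>" by (simp add: abs_mult)
          also have "\<dots> \<le> norm (\<alpha> t) * (\<epsilon>/2)" using closeE[OF t] by (intro mult_left_mono) auto
          finally show "norm (\<alpha> t * (E t - E p)) \<le> \<epsilon>/2 * norm (\<alpha> t)" by (simp add: mult.commute)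
        qed
        then show ?thesis by simp
      qed
      have "\<bar>\<Phi> q - \<Phi> p\<bar> \<le> \<epsilon>/2 * integral {p..q} (\<lambda>t. norm (\<alpha> t)) + integral {p..q} (\<lambda>t. \<epsilon>/2 * norm (\<alpha> t))"
        unfolding eq using b1 b2 by linarith
      also have "\<dots> = \<epsilon> * (M q - M p)" unfolding Mq by simp
      finally show "\<bar>\<Phi> q - \<Phi> p\<bar> \<le> \<epsilon> * (M q - M p)" .
    qed
  qed
  then show "exp (- integral {a..b} \<alpha>) - exp (- integral {a..a} \<alpha>) =
          integral {a..b} (\<lambda>t. - \<alpha> t * exp (- integral {a..t} \<alpha>))"
    unfolding \<Phi>_def k_def E_def A_def by simp
qed



lemma H1_pointwise:
  fixes f :: "real \<Rightarrow> 'a::euclidean_space \<Rightarrow> 'a"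
  assumes lc: "LC f" and h1: "H1 f \<alpha> \<beta>"
  shows "AE t in lborel. \<forall>z. 2 * (f t z \<bullet> z) \<le> \<alpha> t * (norm z)\<^sup>2 + \<beta> t"
proof -
  have cont: "AE t in lborel. \<forall>n::nat. \<exists>L. \<forall>x\<in>cball 0 (real n). \<forall>y\<in>cball 0 (real n).
      norm (f t x - f t y) \<le> L * norm (x - y)"
    unfolding AE_all_countable
  proof
    fix n :: nat
    have "compact (cball (0::'a) (real n))" by simp
    then obtain m l where "AE t in lborel. \<forall>x\<in>cball 0 (real n). \<forall>y\<in>cball 0 (real n).
        norm (f t x) \<le> m t \<and> norm (f t x - f t y) \<le> l t * norm (x - y)"
      using lc unfolding LC_def by blast
    then show "AE t in lborel. \<exists>L. \<forall>x\<in>cball 0 (real n). \<forall>y\<in>cball 0 (real n).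
      norm (f t x - f t y) \<le> L * norm (x - y)"
      by (rule eventually_mono) blast
  qed
  have h1': "AE p in (lborel \<Otimes>\<^sub>M lborel :: (real \<times> 'a) measure).
      2 * (f (fst p) (snd p) \<bullet> snd p) \<le> \<alpha> (fst p) * (norm (snd p))\<^sup>2 + \<beta> (fst p)"
    using h1 unfolding H1_def lborel_prod by blast
  have pair: "AE t in lborel. AE z in lborel. 2 * (f t z \<bullet> z) \<le> \<alpha> t * (norm z)\<^sup>2 + \<beta> t"
    using lborel_pair.AE_pair[OF h1'] by simp
  from cont pair have both: "AE t in lborel. (\<forall>n::nat. \<exists>L. \<forall>x\<in>cball 0 (real n). \<forall>y\<in>cball 0 (real n).
      norm (f t x - f t y) \<le> L * norm (x - y)) \<and>
      (AE z in lborel. 2 * (f t z \<bullet> z) \<le> \<alpha> t * (norm z)\<^sup>2 + \<beta> t)" by (rule AE_conjI)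
  show ?thesis
    using both
    proof (rule eventually_mono, elim conjE)
      fix t
      assume lip: "\<forall>n::nat. \<exists>L. \<forall>x\<in>cball 0 (real n). \<forall>y\<in>cball 0 (real n).
        norm (f t x - f t y) \<le> L * norm (x - y)"
        and ae: "AE z in lborel. 2 * (f t z \<bullet> z) \<le> \<alpha> t * (norm z)\<^sup>2 + \<beta> t"
      have ic: "isCont (f t) z" for z
      proof -
        obtain n :: nat where n: "norm z + 1 < n" using reals_Archimedean2 by blast
        obtain L where L: "\<forall>x\<in>cball 0 (real n). \<forall>y\<in>cball 0 (real n).
          norm (f t x - f t y) \<le> L * norm (x - y)" using lip by blast
        have "(max L 0)-lipschitz_on (cball 0 (real n)) (f t)"
        proof (rule lipschitz_onI)
          fix x y assume "x \<in> cball (0::'a) (real n)" "y \<in> cball (0::'a) (real n)"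
          then have "norm (f t x - f t y) \<le> L * norm (x - y)" using L by blast
          also have "\<dots> \<le> max L 0 * norm (x - y)" by (intro mult_right_mono) auto
          finally show "dist (f t x) (f t y) \<le> max L 0 * dist x y" by (simp add: dist_norm)
        qed simp
        then have "continuous_on (cball 0 (real n)) (f t)" by (rule lipschitz_on_continuous_on)
        moreover have "z \<in> interior (cball 0 (real n))" using n by simp
        ultimately show ?thesis using continuous_on_interior by blast
      qed
      have cf: "continuous_on UNIV (f t)" using ic by (simp add: continuous_at_imp_continuous_on)
      define S where "S = {z. \<alpha> t * (norm z)\<^sup>2 + \<beta> t < 2 * (f t z \<bullet> z)}"
      have oS: "open S" unfolding S_def
        by (intro open_Collect_less continuous_intros continuous_on_compose2[OF cf]) auto
      obtain N where N: "N \<in> null_sets lborel" "{z \<in> space lborel. \<not> (2 * (f t z \<bullet> z) \<le> \<alpha> t * (norm z)\<^sup>2 + \<beta> t)} \<subseteq> N"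
        using ae by (elim AE_E) (auto simp: null_sets_def)
      have "S \<subseteq> N" using N(2) by (auto simp: S_def)
      moreover have "negligible N"
        using N(1) by (simp add: negligible_iff_null_sets null_sets_completionI)
      ultimately have "negligible S" using negligible_subset by blast
      then have "S = {}" using open_not_negligible oS by blast
      then show "\<forall>z. 2 * (f t z \<bullet> z) \<le> \<alpha> t * (norm z)\<^sup>2 + \<beta> t" by (auto simp: S_def not_less)
    qed
qed



lemma integral_le_AE:
  fixes f g :: "real \<Rightarrow> real"
  assumes fi: "f integrable_on S" and gi: "g integrable_on S"
    and ae: "AE u in lborel. u \<in> S \<longrightarrow> f u \<le> g u"
  shows "integral S f \<le> integral S g"
proof -
  obtain N where N: "N \<in> null_sets lborel" "{u \<in> space lborel. \<not> (u \<in> S \<longrightarrow> f u \<le> g u)} \<subseteq> N"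
    using ae by (elim AE_E) (auto simp: null_sets_def)
  have nN: "negligible N" using N(1) by (simp add: negligible_iff_null_sets null_sets_completionI)
  define f' where "f' u = (if u \<in> N then g u else f u)" for u
  have f'i: "f' integrable_on S" by (rule integrable_spike[OF fi nN]) (auto simp: f'_def)
  have "integral S f = integral S f'" by (rule integral_spike[OF nN]) (auto simp: f'_def)
  also have "\<dots> \<le> integral S g"
    by (rule integral_le[OF f'i gi]) (use N(2) in \<open>auto simp: f'_def\<close>)
  finally show ?thesis .
qed

lemma exp_weight_cont:
  fixes \<alpha> :: "real \<Rightarrow> real"
  assumes "\<alpha> integrable_on {s..t}"
  shows "continuous_on {s..t} (\<lambda>u. exp (integral {u..t} \<alpha>))"
proof -
  have "continuous_on {s..t} (\<lambda>u. exp (integral {s..t} \<alpha> - integral {s..u} \<alpha>))"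
    by (intro continuous_intros indefinite_integral_continuous_1 assms)
  moreover have "integral {s..t} \<alpha> - integral {s..u} \<alpha> = integral {u..t} \<alpha>" if "u \<in> {s..t}" for u
    using ind_diff[OF assms, of u t] that by auto
  ultimately show ?thesis using continuous_on_cong by (metis (no_types, lifting))
qed

lemma gronwall_sol:
  fixes f :: "real \<Rightarrow> 'a::euclidean_space \<Rightarrow> 'a"
  assumes sol: "is_solution f r x0 x"
  and pw: "AE t in lborel. \<forall>z. 2 * (f t z \<bullet> z) \<le> \<alpha> t * (norm z)\<^sup>2 + \<beta> t"
  and la: "L1_loc \<alpha>" and lb: "L1_loc \<beta>"
  and rs: "r \<le> s" and st: "s \<le> t"
  shows "(norm (x t))\<^sup>2 \<le> exp (integral {s..t} \<alpha>) * (norm (x s))\<^sup>2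
           + integral {s..t} (\<lambda>u. exp (integral {u..t} \<alpha>) * \<beta> u)"
proof -
  define g where "g = (\<lambda>u. f u (x u))"
  have solD: "\<forall>t\<ge>r. (\<lambda>s. f s (x s)) absolutely_integrable_on {r..t} \<and>
       ((\<lambda>s. f s (x s)) has_integral (x t - x0)) {r..t}"
    using sol unfolding is_solution_def by (elim conjE)
  have solI: "g absolutely_integrable_on {r..w} \<and> (g has_integral (x w - x0)) {r..w}" if "w \<ge> r" for w
    unfolding g_def using spec[OF solD, of w] that by (rule mp)
  have xr: "x r = x0" using sol unfolding is_solution_def by blast
  have intg: "integral {r..w} g = x w - x0" if "w \<ge> r" for w
    using solI[OF that] by (simp add: integral_unique)
  have "t \<ge> r" using rs st by linarith
  then have igr: "g absolutely_integrable_on {r..t}" using solI by blast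
  have "{s..t} \<subseteq> {r..t}" using rs by auto
  then have ig: "g absolutely_integrable_on {s..t}"
    using absolutely_integrable_on_subinterval[OF igr] by blast
  have ig1: "g integrable_on {s..t}" using ig absolutely_integrable_on_def by blast
  have repr: "x w = x s + integral {s..w} g" if "w \<in> {s..t}" for w
  proof -
    have "w \<ge> r" using that rs by auto
    then have "g absolutely_integrable_on {r..w}" using solI by blast
    then have "g integrable_on {r..w}" unfolding absolutely_integrable_on_def by blast
    then have "integral {r..s} g + integral {s..w} g = integral {r..w} g"
      using that rs by (intro Henstock_Kurzweil_Integration.integral_combine) auto
    then show ?thesis using intg[of s] intg[of w] that rs by (auto simp: algebra_simps)
  qed
  have ia: "\<alpha> absolutely_integrable_on {s..t}" using la unfolding L1_loc_def by blast
  have ib: "\<beta> absolutely_integrable_on {s..t}" using lb unfolding L1_loc_def by blast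
  have ia1: "\<alpha> integrable_on {s..t}" using ia absolutely_integrable_on_def by blast
  define h where "h u = g u \<bullet> x u + x u \<bullet> g u" for u
  have ih: "h absolutely_integrable_on {s..t}"
    using product_rule(1)[OF st ig ig repr repr] unfolding h_def by simp
  define y where "y w = x w \<bullet> x w" for w
  have repry: "y w = y s + integral {s..w} h" if w: "w \<in> {s..t}" for w
  proof -
    have sub: "{s..w} \<subseteq> {s..t}" using w by auto
    have "y w - y s = integral {s..w} h"
      unfolding y_def h_def
    proof (rule product_rule(2))
      show "s \<le> w" using w by simp
      show "g absolutely_integrable_on {s..w}" using absolutely_integrable_on_subinterval[OF ig sub] .
      then show "g absolutely_integrable_on {s..w}" .
      show "\<And>ta. ta \<in> {s..w} \<Longrightarrow> x ta = x s + integral {s..ta} g" using repr sub by blast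
      then show "\<And>ta. ta \<in> {s..w} \<Longrightarrow> x ta = x s + integral {s..ta} g" .
    qed
    then show ?thesis by simp
  qed
  define E where "E w = exp (- integral {s..w} \<alpha>)" for w
  define E' where "E' u = - \<alpha> u * E u" for u
  have iE': "E' absolutely_integrable_on {s..t}"
    using exp_chain(1)[OF st ia] unfolding E'_def E_def by simp
  have Es: "E s = 1" by (simp add: E_def)
  have reprE: "E w = E s + integral {s..w} E'" if w: "w \<in> {s..t}" for w
  proof -
    have sub: "{s..w} \<subseteq> {s..t}" using w by auto
    have "E w - E s = integral {s..w} E'"
      using exp_chain(2)[of s w \<alpha>] w absolutely_integrable_on_subinterval[OF ia sub]
      unfolding E'_def E_def by simp
    then show ?thesis by simp
  qed
  have prod: "E t \<bullet> y t - E s \<bullet> y s = integral {s..t} (\<lambda>u. E' u \<bullet> y u + E u \<bullet> h u)"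
    by (rule product_rule(2)[OF st iE' ih reprE repry])
  have cE: "continuous_on {s..t} E" unfolding E_def
    by (intro continuous_intros indefinite_integral_continuous_1 ia1)
  have iEb: "(\<lambda>u. E u * \<beta> u) absolutely_integrable_on {s..t}"
    using abs_int_inner_cont(1)[OF cE ib] by simp
  have iprod: "(\<lambda>u. E' u \<bullet> y u + E u \<bullet> h u) absolutely_integrable_on {s..t}"
    by (rule product_rule(1)[OF st iE' ih reprE repry])
  have le: "integral {s..t} (\<lambda>u. E' u \<bullet> y u + E u \<bullet> h u) \<le> integral {s..t} (\<lambda>u. E u * \<beta> u)"
  proof (rule integral_le_AE)
    show "(\<lambda>u. E' u \<bullet> y u + E u \<bullet> h u) integrable_on {s..t}"
      using iprod absolutely_integrable_on_def by blast
    show "(\<lambda>u. E u * \<beta> u) integrable_on {s..t}" using iEb absolutely_integrable_on_def by blast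
    show "AE u in lborel. u \<in> {s..t} \<longrightarrow> E' u \<bullet> y u + E u \<bullet> h u \<le> E u * \<beta> u"
      using pw
    proof (rule eventually_mono, intro impI)
      fix u assume H: "\<forall>z. 2 * (f u z \<bullet> z) \<le> \<alpha> u * (norm z)\<^sup>2 + \<beta> u"
      have "h u \<le> \<alpha> u * y u + \<beta> u"
        using H[rule_format, of "x u"] unfolding h_def y_def g_def
        by (simp add: inner_commute power2_norm_eq_inner)
      moreover have "E u > 0" by (simp add: E_def)
      ultimately have "E u * h u \<le> E u * (\<alpha> u * y u + \<beta> u)" by (intro mult_left_mono) auto
      then show "E' u \<bullet> y u + E u \<bullet> h u \<le> E u * \<beta> u"
        by (simp add: E'_def algebra_simps)
    qed
  qed
  have Etpos: "E t > 0" by (simp add: E_def)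
  have main: "E t * y t \<le> y s + integral {s..t} (\<lambda>u. E u * \<beta> u)"
    using prod le Es by simp
  have wt: "E u / E t = exp (integral {u..t} \<alpha>)" if "u \<in> {s..t}" for u
  proof -
    have "integral {s..t} \<alpha> - integral {s..u} \<alpha> = integral {u..t} \<alpha>"
      using ind_diff[OF ia1, of u t] that by auto
    have "E u / E t = exp (- integral {s..u} \<alpha> - - integral {s..t} \<alpha>)"
      unfolding E_def by (rule exp_diff[symmetric])
    also have "- integral {s..u} \<alpha> - - integral {s..t} \<alpha> = integral {u..t} \<alpha>"
      using \<open>integral {s..t} \<alpha> - integral {s..u} \<alpha> = integral {u..t} \<alpha>\<close> by linarith
    finally show ?thesis .
  qed
  have "y t \<le> (y s + integral {s..t} (\<lambda>u. E u * \<beta> u)) / E t"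
    using main Etpos by (simp add: field_simps)
  also have "\<dots> = y s / E t + integral {s..t} (\<lambda>u. E u * \<beta> u) / E t"
    by (simp add: add_divide_distrib)
  also have "integral {s..t} (\<lambda>u. E u * \<beta> u) / E t = integral {s..t} (\<lambda>u. E u * \<beta> u / E t)"
    by simp
  also have "\<dots> = integral {s..t} (\<lambda>u. exp (integral {u..t} \<alpha>) * \<beta> u)"
    by (rule integral_cong) (simp add: wt[symmetric])
  also have "y s / E t = exp (integral {s..t} \<alpha>) * y s"
    unfolding E_def exp_minus by (simp add: divide_inverse mult.commute)
  finally show ?thesis by (simp add: y_def power2_norm_eq_inner)
qed



lemma weight_int0:
  fixes \<alpha> \<beta> :: "real \<Rightarrow> real"
  assumes la: "L1_loc \<alpha>" and lb: "L1_loc \<beta>"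
  shows "(\<lambda>u. exp (integral {u..t} \<alpha>) * \<beta> u) integrable_on {s..t}"
proof -
  have ia: "\<alpha> integrable_on {s..t}" using la unfolding L1_loc_def absolutely_integrable_on_def by blast
  have ib: "\<beta> absolutely_integrable_on {s..t}" using lb unfolding L1_loc_def by blast
  have c: "continuous_on {s..t} (\<lambda>u. exp (integral {u..t} \<alpha>))"
  proof -
    have "continuous_on {s..t} (\<lambda>u. exp (integral {s..t} \<alpha> - integral {s..u} \<alpha>))"
      by (intro continuous_intros indefinite_integral_continuous_1 ia)
    moreover have "integral {s..t} \<alpha> - integral {s..u} \<alpha> = integral {u..t} \<alpha>" if "u \<in> {s..t}" for u
      using ind_diff[OF ia, of u t] that by auto
    ultimately show ?thesis using continuous_on_cong by (metis (no_types, lifting))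
  qed
  have "(\<lambda>u. exp (integral {u..t} \<alpha>) * \<beta> u) absolutely_integrable_on {s..t}"
    using abs_int_inner_cont(1)[OF c ib] by simp
  then show ?thesis unfolding absolutely_integrable_on_def by blast
qed

lemma weight_int:
  fixes \<alpha> \<beta> :: "real \<Rightarrow> real"
  assumes la: "L1_loc \<alpha>" and lb: "L1_loc \<beta>" and bt: "b \<le> t"
  shows "(\<lambda>u. exp (integral {u..t} \<alpha>) * \<beta> u) integrable_on {a..b}"
proof (cases "a \<le> b")
  case True
  have "{a..b} \<subseteq> {a..t}" using bt by auto
  then show ?thesis using integrable_on_subinterval[OF weight_int0[OF la lb, of t a]] by blast
next
  case False
  then have "{a..b} = {}" by auto
  then show ?thesis using integrable_on_empty by metis
qed

lemma beta_unit:
  fixes \<beta> :: "real \<Rightarrow> real"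
  assumes h3: "H3 \<beta>" and lb: "L1_loc \<beta>" and bpos: "\<forall>t. \<beta> t \<ge> 0"
  obtains B where "B \<ge> 0" "\<And>p q. p \<le> q \<Longrightarrow> q \<le> p + 1 \<Longrightarrow> integral {p..q} \<beta> \<le> B"
proof -
  obtain B where B: "\<And>t. integral {-1..1} (\<lambda>s. \<beta> (s + t)) \<le> B"
  proof -
    have "bdd_above (range (\<lambda>t. integral {-1..1} (\<lambda>s. \<beta> (s + t))))"
      using h3 unfolding H3_def by (simp del: One_nat_def)
    then obtain M where "\<forall>x\<in>range (\<lambda>t. integral {-1..1} (\<lambda>s. \<beta> (s + t))). x \<le> M"
      unfolding bdd_above_def by blast
    then show ?thesis using that by blast
  qed
  have ib: "\<beta> integrable_on {a..b}" for a b
    using lb unfolding L1_loc_def absolutely_integrable_on_def by blast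
  have sh: "integral {-1..1} (\<lambda>s. \<beta> (s + t)) = integral {t-1..t+1} \<beta>" for t
  proof -
    have "(\<lambda>s. \<beta> (s + t)) = \<beta> \<circ> (+) t" by (auto simp: fun_eq_iff add.commute)
    then show ?thesis using integral_shift_Icc_real[of "-1" 1 \<beta> t] by (simp add: add.commute)
  qed
  have le: "integral {p..q} \<beta> \<le> B" if "p \<le> q" "q \<le> p + 1" for p q
  proof -
    have "integral {p..q} \<beta> \<le> integral {p-1..p+1} \<beta>"
      using that by (intro integral_subset_le ib) (auto simp: bpos)
    also have "\<dots> \<le> B" using B[of p] sh[of p] by simp
    finally show ?thesis .
  qed
  have "0 \<le> integral {0..0} \<beta>" by simp
  then have "B \<ge> 0" using le[of 0 0] by simp
  then show ?thesis using that le by blast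
qed

lemma tail_bound:
  fixes \<alpha> \<beta> :: "real \<Rightarrow> real"
  assumes la: "L1_loc \<alpha>" and lb: "L1_loc \<beta>" and bpos: "\<forall>t. \<beta> t \<ge> 0"
    and a1: "\<alpha>1 > 0" and K: "K \<ge> 1"
    and h2: "\<forall>s t. 0 \<le> s \<and> s \<le> t \<longrightarrow> exp (integral {s..t} \<alpha>) \<le> K * exp (- \<alpha>1 * (t - s))"
    and B: "B \<ge> 0" "\<And>p q. p \<le> q \<Longrightarrow> q \<le> p + 1 \<Longrightarrow> integral {p..q} \<beta> \<le> B"
    and s: "0 \<le> s" "s \<le> t"
  shows "integral {s..t} (\<lambda>u. exp (integral {u..t} \<alpha>) * \<beta> u) \<le> K * B / (1 - exp (- \<alpha>1))"
proof -
  define \<phi> where "\<phi> = (\<lambda>u. exp (integral {u..t} \<alpha>) * \<beta> u)"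
  define q where "q = exp (- \<alpha>1)"
  have q: "0 < q" "q < 1" using a1 by (auto simp: q_def)
  have ib: "\<beta> integrable_on {a..b}" for a b
    using lb unfolding L1_loc_def absolutely_integrable_on_def by blast
  have iphi2: "\<phi> integrable_on {a..b}" if "b \<le> t" for a b
    unfolding \<phi>_def by (rule weight_int[OF la lb that])
  have P: "\<forall>s'. s \<le> s' \<and> s' \<le> t \<and> t - real n \<le> s' \<longrightarrow>
      integral {s'..t} \<phi> \<le> K * B * (\<Sum>k<n. q ^ k)" for n
  proof (induction n)
    case 0
    then show ?case by auto
  next
    case (Suc n)
    show ?case
    proof (intro allI impI, elim conjE)
      fix s' assume s': "s \<le> s'" "s' \<le> t" "t - real (Suc n) \<le> s'"
      have KB: "K * B * q ^ n \<ge> 0" using K B q by simp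
      show "integral {s'..t} \<phi> \<le> K * B * (\<Sum>k<Suc n. q ^ k)"
      proof (cases "t - real n \<le> s'")
        case True
        then have "integral {s'..t} \<phi> \<le> K * B * (\<Sum>k<n. q ^ k)" using Suc.IH s' by blast
        then show ?thesis using KB by (simp add: algebra_simps)
      next
        case False
        define c where "c = t - real n"
        have c: "s' \<le> c" "c \<le> t" "c \<le> s' + 1" using False s' by (auto simp: c_def)
        have split: "integral {s'..c} \<phi> + integral {c..t} \<phi> = integral {s'..t} \<phi>"
          using c by (intro Henstock_Kurzweil_Integration.integral_combine iphi2) auto
        have IH: "integral {c..t} \<phi> \<le> K * B * (\<Sum>k<n. q ^ k)"
          using Suc.IH c s' by (auto simp: c_def)
        have pt: "\<phi> u \<le> K * q ^ n * \<beta> u" if u: "u \<in> {s'..c}" for u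
        proof -
          have "exp (integral {u..t} \<alpha>) \<le> K * exp (- \<alpha>1 * (t - u))"
            using h2[rule_format, of u t] u s' c s by auto
          also have "\<dots> \<le> K * exp (- \<alpha>1 * real n)"
            using u a1 K by (auto simp: c_def mult_le_cancel_left_pos)
          also have "exp (- \<alpha>1 * real n) = q ^ n"
            unfolding q_def using exp_of_nat_mult[of n "- \<alpha>1"] by (simp add: mult.commute)
          finally have "exp (integral {u..t} \<alpha>) \<le> K * q ^ n" .
          then show ?thesis unfolding \<phi>_def using bpos by (intro mult_right_mono) auto
        qed
        have "integral {s'..c} \<phi> \<le> integral {s'..c} (\<lambda>u. K * q ^ n * \<beta> u)"
          using pt c by (intro integral_le iphi2 integrable_on_mult_right ib) auto
        also have "\<dots> = K * q ^ n * integral {s'..c} \<beta>" by simp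
        also have "\<dots> \<le> K * q ^ n * B"
          using B(2)[OF c(1) c(3)] K q by (intro mult_left_mono) auto
        finally have "integral {s'..c} \<phi> \<le> K * B * q ^ n" by (simp add: algebra_simps)
        then show ?thesis using split IH by (simp add: algebra_simps)
      qed
    qed
  qed
  define n where "n = nat \<lceil>t - s\<rceil>"
  have "t - real n \<le> s" unfolding n_def by linarith
  then have "integral {s..t} \<phi> \<le> K * B * (\<Sum>k<n. q ^ k)" using P[of n] s by auto
  also have "(\<Sum>k<n. q ^ k) \<le> 1 / (1 - q)"
  proof -
    have "(\<Sum>k<n. q ^ k) = (1 - q ^ n) / (1 - q)" using sum_gp_strict[of q n] q by simp
    also have "\<dots> \<le> 1 / (1 - q)" using q by (intro divide_right_mono) auto
    finally show ?thesis .
  qed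
  then have "K * B * (\<Sum>k<n. q ^ k) \<le> K * B * (1 / (1 - q))" using K B by (intro mult_left_mono) auto
  finally show ?thesis unfolding \<phi>_def q_def by simp
qed



lemma int_abs_bound:
  fixes \<alpha> :: "real \<Rightarrow> real"
  assumes la: "L1_loc \<alpha>" and u: "a \<le> u" "u \<le> b"
  shows "integral {u..b} \<alpha> \<le> integral {a..b} (\<lambda>v. \<bar>\<alpha> v\<bar>)"
proof -
  have i1: "\<alpha> integrable_on {c..d}" and i2: "(\<lambda>v. \<bar>\<alpha> v\<bar>) integrable_on {c..d}" for c d
    using la unfolding L1_loc_def absolutely_integrable_on_def by auto
  have "integral {u..b} \<alpha> \<le> integral {u..b} (\<lambda>v. \<bar>\<alpha> v\<bar>)"
    by (rule integral_le[OF i1 i2]) auto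
  also have "\<dots> \<le> integral {a..b} (\<lambda>v. \<bar>\<alpha> v\<bar>)"
    using u by (intro integral_subset_le i2) auto
  finally show ?thesis .
qed

theorem theorem6p5:
  fixes f :: "real \<Rightarrow> 'a::euclidean_space \<Rightarrow> 'a" and \<alpha> \<beta> :: "real \<Rightarrow> real"
  assumes "LC f" and "H1 f \<alpha> \<beta>" and "H3 \<beta>" and "H2star \<alpha>"
  shows "\<forall>\<tau>. uub f \<tau>"
proof
  fix \<tau> :: real
  have la: "L1_loc \<alpha>" and lb: "L1_loc \<beta>" and bpos: "\<forall>t. \<beta> t \<ge> 0"
    using assms(2) unfolding H1_def by auto
  have pw: "AE t in lborel. \<forall>z. 2 * (f t z \<bullet> z) \<le> \<alpha> t * (norm z)\<^sup>2 + \<beta> t"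
    by (rule H1_pointwise[OF assms(1,2)])
  obtain \<alpha>1 K where a1: "\<alpha>1 > 0" and K: "K \<ge> 1"
    and h2: "\<forall>s t. 0 \<le> s \<and> s \<le> t \<longrightarrow> exp (integral {s..t} \<alpha>) \<le> K * exp (- \<alpha>1 * (t - s))"
    using assms(4) unfolding H2star_def by blast
  obtain B where B: "B \<ge> 0" "\<And>p q. p \<le> q \<Longrightarrow> q \<le> p + 1 \<Longrightarrow> integral {p..q} \<beta> \<le> B"
    using beta_unit[OF assms(3) lb bpos] by blast
  have ib: "\<beta> integrable_on {c..d}" for c d
    using lb unfolding L1_loc_def absolutely_integrable_on_def by auto
  define C where "C = K * B / (1 - exp (- \<alpha>1))"
  have C0: "C \<ge> 0" using K B a1 by (simp add: C_def)
  define \<tau>' where "\<tau>' = min \<tau> 0"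
  define M0 where "M0 = exp (integral {\<tau>'..0} (\<lambda>v. \<bar>\<alpha> v\<bar>))"
  define B\<tau> where "B\<tau> = integral {\<tau>'..0} \<beta>"
  have M0: "M0 > 0" by (simp add: M0_def)
  have Bt: "B\<tau> \<ge> 0" unfolding B\<tau>_def using bpos by (intro integral_nonneg ib) auto
  show "uub f \<tau>" unfolding uub_def
  proof (rule exI[of _ "sqrt (C + 1)"], intro conjI allI impI)
    show "sqrt (C + 1) > 0" using C0 by simp
    fix d :: real assume d: "d > 0"
    define D where "D = M0 * d\<^sup>2 + M0 * B\<tau> + d\<^sup>2"
    have D0: "D \<ge> 0" using M0 Bt by (simp add: D_def)
    define T1 where "T1 = ln (K * D + 1) / \<alpha>1"
    have KD: "K * D + 1 \<ge> 1" using K D0 by simp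
    have T1: "T1 \<ge> 0" using KD a1 by (simp add: T1_def)
    have eT1: "exp (- \<alpha>1 * T1) = 1 / (K * D + 1)"
    proof -
      have "- \<alpha>1 * T1 = - ln (K * D + 1)" using a1 by (simp add: T1_def)
      then show ?thesis using KD by (simp add: exp_minus inverse_eq_divide)
    qed
    define T where "T = - \<tau>' + T1 + 1"
    have \<tau>'0: "\<tau>' \<le> 0" by (simp add: \<tau>'_def)
    show "\<exists>T>0. \<forall>r x0 x t. \<tau> \<le> r \<longrightarrow> T \<le> t \<longrightarrow> norm x0 \<le> d \<longrightarrow> is_solution f r x0 x \<longrightarrow>
          norm (x (t + r)) \<le> sqrt (C + 1)"
    proof (rule exI[of _ T], intro conjI allI impI)
      show "T > 0" using T1 \<tau>'0 by (simp add: T_def)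
      fix r x0 x t
      assume r: "\<tau> \<le> r" and t: "T \<le> t" and x0: "norm x0 \<le> d" and sol: "is_solution f r x0 x"
      have xr: "x r = x0" using sol unfolding is_solution_def by blast
      have nx0: "(norm x0)\<^sup>2 \<le> d\<^sup>2" using x0 by (simp add: power_mono)
      define s0 where "s0 = max r 0"
      have ys0: "(norm (x s0))\<^sup>2 \<le> D"
      proof (cases "r \<ge> 0")
        case True
        then have "s0 = r" by (simp add: s0_def)
        then show ?thesis using xr nx0 M0 Bt D_def
          by (smt (verit) mult_nonneg_nonneg zero_le_power2)
      next
        case False
        then have s00: "s0 = 0" by (simp add: s0_def)
        have r\<tau>: "\<tau>' \<le> r" using r by (simp add: \<tau>'_def)
        have g: "(norm (x 0))\<^sup>2 \<le> exp (integral {r..0} \<alpha>) * (norm (x r))\<^sup>2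
           + integral {r..0} (\<lambda>u. exp (integral {u..0} \<alpha>) * \<beta> u)"
          using gronwall_sol[OF sol pw la lb, of r 0] False by simp
        have e1: "exp (integral {r..0} \<alpha>) \<le> M0"
          unfolding M0_def using int_abs_bound[OF la r\<tau>, of 0] False by simp
        have e2: "integral {r..0} (\<lambda>u. exp (integral {u..0} \<alpha>) * \<beta> u) \<le> integral {r..0} (\<lambda>u. M0 * \<beta> u)"
        proof (rule integral_le)
          show "(\<lambda>u. exp (integral {u..0} \<alpha>) * \<beta> u) integrable_on {r..0}"
            by (rule weight_int[OF la lb]) simp
          show "(\<lambda>u. M0 * \<beta> u) integrable_on {r..0}" by (intro integrable_on_mult_right ib)
          fix u assume u: "u \<in> {r..0}"
          have "exp (integral {u..0} \<alpha>) \<le> M0"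
            unfolding M0_def using int_abs_bound[OF la, of \<tau>' u 0] u r\<tau> by simp
          then show "exp (integral {u..0} \<alpha>) * \<beta> u \<le> M0 * \<beta> u"
            using bpos by (intro mult_right_mono) auto
        qed
        have e3: "integral {r..0} (\<lambda>u. M0 * \<beta> u) \<le> M0 * B\<tau>"
        proof -
          have "integral {r..0} \<beta> \<le> B\<tau>"
            unfolding B\<tau>_def using r\<tau> bpos by (intro integral_subset_le ib) auto
          then show ?thesis using M0 by simp
        qed
        have "exp (integral {r..0} \<alpha>) * (norm (x r))\<^sup>2 \<le> M0 * d\<^sup>2"
          using e1 nx0 xr M0 by (intro mult_mono) auto
        then have "(norm (x 0))\<^sup>2 \<le> M0 * d\<^sup>2 + M0 * B\<tau>" using g e2 e3 by linarith
        moreover have "(0::real) \<le> d\<^sup>2" by simp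
        ultimately show ?thesis unfolding s00 D_def by linarith
      qed
      have s0r: "r \<le> s0" "0 \<le> s0" by (auto simp: s0_def)
      have tr: "s0 + T1 \<le> t + r"
      proof (cases "r \<ge> 0")
        case True then show ?thesis using t T1 \<tau>'0 by (simp add: s0_def T_def)
      next
        case False
        have "\<tau>' \<le> r" using r by (simp add: \<tau>'_def)
        then show ?thesis using False t by (simp add: s0_def T_def)
      qed
      have st: "s0 \<le> t + r" using tr T1 by linarith
      have g: "(norm (x (t + r)))\<^sup>2 \<le> exp (integral {s0..t + r} \<alpha>) * (norm (x s0))\<^sup>2
           + integral {s0..t + r} (\<lambda>u. exp (integral {u..t + r} \<alpha>) * \<beta> u)"
        by (rule gronwall_sol[OF sol pw la lb s0r(1) st])
      have tb: "integral {s0..t + r} (\<lambda>u. exp (integral {u..t + r} \<alpha>) * \<beta> u) \<le> C"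
        unfolding C_def by (rule tail_bound[OF la lb bpos a1 K h2 B s0r(2) st])
      have "exp (integral {s0..t + r} \<alpha>) \<le> K * exp (- \<alpha>1 * (t + r - s0))"
        using h2 s0r st by auto
      also have "\<dots> \<le> K * exp (- \<alpha>1 * T1)"
        using tr a1 K by (auto simp: mult_le_cancel_left_pos)
      also have "\<dots> = K / (K * D + 1)" using eT1 by simp
      finally have e: "exp (integral {s0..t + r} \<alpha>) \<le> K / (K * D + 1)" .
      have "exp (integral {s0..t + r} \<alpha>) * (norm (x s0))\<^sup>2 \<le> K / (K * D + 1) * D"
        using e ys0 K KD by (intro mult_mono) auto
      also have "\<dots> \<le> 1"
      proof -
        have "K / (K * D + 1) * D = (K * D) / (K * D + 1)" by simp
        also have "\<dots> \<le> 1" using KD by (simp add: divide_le_eq_1)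
        finally show ?thesis .
      qed
      finally have "(norm (x (t + r)))\<^sup>2 \<le> C + 1" using g tb by linarith
      then have "sqrt ((norm (x (t + r)))\<^sup>2) \<le> sqrt (C + 1)" by (rule real_sqrt_le_mono)
      then show "norm (x (t + r)) \<le> sqrt (C + 1)" by simp
    qed
  qed
qed

end
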